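(* If $n=p_1^{m_1}p_2^{m_2}$ with primes $p_1<p_2$, positive integers $m_1,m_2$, and $m_i>1$ for at least one $i$, then $\mathcal E_{\mathbb Z_n}$ is Laplacian integral.
   Context: The essential ideal graph $\mathcal E_{\mathbb Z_n}$ has vertices the nonzero proper ideals of $\mathbb Z_n$, with distinct $I,K$ adjacent iff $I+K$ is an essential ideal (an ideal meeting every nonzero ideal nontrivially). A graph is Laplacian integral if all eigenvalues of its Laplacian matrix $D-A$ are integers. *)

theory Defs
  imports Complex_Main "HOL-Number_Theory.Residues" "HOL-Algebra.AbelCoset"
begin

definition laplacian_apply ::
  "'v set \<Rightarrow> ('v \<Rightarrow> 'v \<Rightarrow> bool) \<Rightarrow> ('v \<Rightarrow> complex) \<Rightarrow> 'v \<Rightarrow> complex" where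
  "laplacian_apply V adj f x =
     of_nat (card {y \<in> V. adj x y}) * f x - (\<Sum>y\<in>{y \<in> V. adj x y}. f y)"

definition laplacian_eigenvalue ::
  "'v set \<Rightarrow> ('v \<Rightarrow> 'v \<Rightarrow> bool) \<Rightarrow> complex \<Rightarrow> bool" where
  "laplacian_eigenvalue V adj \<mu> \<longleftrightarrow>
     (\<exists>f. (\<exists>x\<in>V. f x \<noteq> 0) \<and> (\<forall>x\<in>V. laplacian_apply V adj f x = \<mu> * f x))"

definition laplacian_integral :: "'v set \<Rightarrow> ('v \<Rightarrow> 'v \<Rightarrow> bool) \<Rightarrow> bool" where
  "laplacian_integral V adj \<longleftrightarrow> (\<forall>\<mu>. laplacian_eigenvalue V adj \<mu> \<longrightarrow> \<mu> \<in> \<int>)"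

definition essential_ideal :: "('a, 'b) ring_scheme \<Rightarrow> 'a set \<Rightarrow> bool" where
  "essential_ideal R J \<longleftrightarrow> ideal J R \<and>
     (\<forall>K. ideal K R \<and> K \<noteq> {\<zero>\<^bsub>R\<^esub>} \<longrightarrow> J \<inter> K \<noteq> {\<zero>\<^bsub>R\<^esub>})"

definition essential_ideal_graph_vertices :: "('a, 'b) ring_scheme \<Rightarrow> 'a set set" where
  "essential_ideal_graph_vertices R =
     {I. ideal I R \<and> I \<noteq> {\<zero>\<^bsub>R\<^esub>} \<and> I \<noteq> carrier R}"

definition essential_ideal_graph_adj :: "('a, 'b) ring_scheme \<Rightarrow> 'a set \<Rightarrow> 'a set \<Rightarrow> bool" where
  "essential_ideal_graph_adj R I K \<longleftrightarrow> I \<noteq> K \<and> essential_ideal R (set_add R I K)"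

end

theory Submission
  imports Defs
begin

lemma multipartite_laplacian_integral:
  fixes V :: "'v set" and R adj :: "'v \<Rightarrow> 'v \<Rightarrow> bool"
  assumes fin: "finite V"
    and reflR: "\<And>x. x \<in> V \<Longrightarrow> R x x"
    and sym: "\<And>x y. x \<in> V \<Longrightarrow> y \<in> V \<Longrightarrow> R x y \<Longrightarrow> R y x"
    and trans: "\<And>x y z. x \<in> V \<Longrightarrow> y \<in> V \<Longrightarrow> z \<in> V \<Longrightarrow> R x y \<Longrightarrow> R y z \<Longrightarrow> R x z"
    and adj: "\<And>x y. x \<in> V \<Longrightarrow> y \<in> V \<Longrightarrow> adj x y \<longleftrightarrow> \<not> R x y"
  shows "laplacian_integral V adj"
  unfolding laplacian_integral_def
proof (intro allI impI)
  fix \<mu> assume "laplacian_eigenvalue V adj \<mu>"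
  then obtain f x0 where x0: "x0 \<in> V" "f x0 \<noteq> 0"
    and eq: "\<And>x. x \<in> V \<Longrightarrow> laplacian_apply V adj f x = \<mu> * f x"
    unfolding laplacian_eigenvalue_def by blast
  show "\<mu> \<in> \<int>"
  proof (rule ccontr)
    assume nint: "\<mu> \<notin> \<int>"
    define C where "C x = {y \<in> V. R x y}" for x
    define N where "N = card V"
    define c where "c x = card (C x)" for x
    define S where "S = (\<Sum>y\<in>V. f y)"
    define g where "g x = (\<Sum>y\<in>C x. f y)" for x
    have CV: "C x \<subseteq> V" for x unfolding C_def by auto
    have finC: "finite (C x)" for x using CV fin finite_subset by blast
    have nb: "{y \<in> V. adj x y} = V - C x" if "x \<in> V" for x
      using adj[OF that] unfolding C_def by auto
    have cle: "c x \<le> N" for x unfolding c_def N_def using CV fin card_mono by blast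
    have eq': "(of_nat N - of_nat (c x)) * f x - (S - g x) = \<mu> * f x" if "x \<in> V" for x
    proof -
      have "card {y \<in> V. adj x y} = N - c x"
        unfolding nb[OF that] N_def c_def using card_Diff_subset[OF finC CV] by simp
      moreover have "(\<Sum>y\<in>{y \<in> V. adj x y}. f y) = S - g x"
        unfolding nb[OF that] S_def g_def using sum_diff[OF fin CV] by simp
      ultimately show ?thesis using eq[OF that] cle[of x]
        unfolding laplacian_apply_def by (simp add: of_nat_diff)
    qed
    have mu0: "\<mu> \<noteq> 0" using nint by auto
    have muN: "\<mu> \<noteq> of_nat N" using nint by (metis Ints_of_nat)
    have muNc: "of_nat N - of_nat (c x) - \<mu> \<noteq> 0" for x
      using nint by (metis Ints_diff Ints_of_nat eq_iff_diff_eq_0)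
    have sumg: "(\<Sum>x\<in>V. g x) = (\<Sum>x\<in>V. of_nat (c x) * f x)"
    proof -
      have "(\<Sum>x\<in>V. g x) = (\<Sum>x\<in>V. \<Sum>y\<in>{y\<in>V. R x y}. f y)" unfolding g_def C_def by simp
      also have "\<dots> = (\<Sum>y\<in>V. \<Sum>x | x \<in> V \<and> R x y. f y)"
        by (rule sum.swap_restrict[OF fin fin])
      also have "\<dots> = (\<Sum>y\<in>V. of_nat (c y) * f y)"
      proof (rule sum.cong[OF refl])
        fix y assume y: "y \<in> V"
        have "{x. x \<in> V \<and> R x y} = C y" unfolding C_def using sym y by blast
        then show "(\<Sum>x | x \<in> V \<and> R x y. f y) = of_nat (c y) * f y" by (simp add: c_def)
      qed
      finally show ?thesis .
    qed
    have S0: "S = 0"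
    proof -
      have "(\<Sum>x\<in>V. \<mu> * f x) = (\<Sum>x\<in>V. (of_nat N - of_nat (c x)) * f x - (S - g x))"
        using eq' by (intro sum.cong[OF refl]) simp
      also have "\<dots> = (\<Sum>x\<in>V. of_nat N * f x - of_nat (c x) * f x - S + g x)"
        by (rule sum.cong[OF refl]) (simp add: algebra_simps)
      also have "\<dots> = (\<Sum>x\<in>V. of_nat N * f x) - (\<Sum>x\<in>V. of_nat (c x) * f x) - (\<Sum>x\<in>V. S) + (\<Sum>x\<in>V. g x)"
        by (simp only: sum.distrib sum_subtractf)
      also have "\<dots> = 0" using sumg by (simp add: sum_distrib_left[symmetric] S_def N_def)
      finally have "\<mu> * S = 0" by (simp add: S_def sum_distrib_left)
      thus ?thesis using mu0 by simp
    qed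
    have g0: "g x = 0" if x: "x \<in> V" for x
    proof -
      have same: "C y = C x" if "y \<in> C x" for y
        using that x sym trans unfolding C_def by blast
      have "(\<Sum>y\<in>C x. \<mu> * f y) = (\<Sum>y\<in>C x. (of_nat N - of_nat (c x)) * f y - (0 - g x))"
      proof (rule sum.cong[OF refl])
        fix y assume y: "y \<in> C x"
        have yV: "y \<in> V" using y CV by blast
        have "c y = c x" "g y = g x" using same[OF y] unfolding c_def g_def by simp_all
        thus "\<mu> * f y = (of_nat N - of_nat (c x)) * f y - (0 - g x)"
          using eq'[OF yV] S0 by simp
      qed
      also have "\<dots> = (of_nat N - of_nat (c x)) * g x + of_nat (c x) * g x"
        by (simp add: sum.distrib sum_distrib_left g_def c_def)
      finally have "\<mu> * g x = of_nat N * g x" by (simp add: sum_distrib_left g_def algebra_simps)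
      hence "(\<mu> - of_nat N) * g x = 0" by (simp add: algebra_simps)
      thus ?thesis using muN by simp
    qed
    have "(of_nat N - of_nat (c x0) - \<mu>) * f x0 = 0"
      using eq'[OF x0(1)] S0 g0[OF x0(1)] by (simp add: algebra_simps)
    thus False using muNc x0 by simp
  qed
qed


lemma prime_power_not_dvd_lcm:
  fixes y z p :: int and k :: nat
  assumes "prime p" "y \<noteq> 0" "z \<noteq> 0" "\<not> p ^ k dvd y" "\<not> p ^ k dvd z"
  shows "\<not> p ^ k dvd lcm y z"
proof
  assume h: "p ^ k dvd lcm y z"
  have nu: "\<not> is_unit p" using assms(1) not_prime_unit by blast
  have l0: "lcm y z \<noteq> 0" using assms(2,3) by simp
  have "k \<le> multiplicity p (lcm y z)" using h power_dvd_iff_le_multiplicity[OF l0 nu] by simp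
  also have "\<dots> = max (multiplicity p y) (multiplicity p z)"
    by (rule multiplicity_lcm[OF assms(2,3,1)])
  finally have "k \<le> multiplicity p y \<or> k \<le> multiplicity p z" by linarith
  moreover have "\<not> k \<le> multiplicity p y" using assms(4) power_dvd_iff_le_multiplicity[OF assms(2) nu] by simp
  moreover have "\<not> k \<le> multiplicity p z" using assms(5) power_dvd_iff_le_multiplicity[OF assms(3) nu] by simp
  ultimately show False by blast
qed

lemma (in ring) ideal_sum_sub:
  assumes "ideal I R" "ideal K R" "ideal D R"
  shows "I <+> K \<subseteq> D \<longleftrightarrow> I \<subseteq> D \<and> K \<subseteq> D"
proof
  assume h: "I <+> K \<subseteq> D"
  have "I \<subseteq> I <+> K"
  proof
    fix i assume "i \<in> I"
    moreover have "\<zero> \<in> K" using assms(2) by (simp add: additive_subgroup.zero_closed ideal.axioms(1))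
    moreover have "i \<oplus> \<zero> = i" using \<open>i \<in> I\<close> assms(1) ideal.Icarr by fastforce
    ultimately show "i \<in> I <+> K" unfolding set_add_def' by force
  qed
  moreover have "K \<subseteq> I <+> K"
  proof
    fix i assume "i \<in> K"
    moreover have "\<zero> \<in> I" using assms(1) by (simp add: additive_subgroup.zero_closed ideal.axioms(1))
    moreover have "\<zero> \<oplus> i = i" using \<open>i \<in> K\<close> assms(2) ideal.Icarr by fastforce
    ultimately show "i \<in> I <+> K" unfolding set_add_def' by force
  qed
  ultimately show "I \<subseteq> D \<and> K \<subseteq> D" using h by blast
next
  assume "I \<subseteq> D \<and> K \<subseteq> D"
  then show "I <+> K \<subseteq> D" unfolding set_add_def'
    using assms(3) by (auto intro: additive_subgroup.a_closed ideal.axioms(1))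
qed

context residues
begin

lemma dvd_ideal:
  assumes "0 < d" "d dvd m" "d < m"
  shows "ideal {x \<in> carrier R. d dvd x} R"
proof -
  have dC: "d \<in> carrier R" using assms by (simp add: res_carrier_eq)
  have "cgenideal R d = {x \<in> carrier R. d dvd x}"
  proof (intro equalityI subsetI)
      fix x assume "x \<in> cgenideal R d"
      then obtain y where "x = (y * d) mod m" unfolding cgenideal_def res_mult_eq by auto
      then show "x \<in> {x \<in> carrier R. d dvd x}" using m_gt_one assms
        by (auto simp: res_carrier_eq dvd_mod)
    next
      fix x assume x: "x \<in> {x \<in> carrier R. d dvd x}"
      then have x0: "0 \<le> x" "x < m" "d dvd x" by (auto simp: res_carrier_eq)
      define y where "y = x div d"
      have "y * d = x" using x0(3) unfolding y_def by simp
      moreover have "y \<in> carrier R"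
      proof -
        have y0: "0 \<le> y" unfolding y_def using x0 assms by (simp add: pos_imp_zdiv_nonneg_iff)
        have "y * 1 \<le> y * d" using y0 assms by (intro mult_left_mono) auto
        then have "y \<le> x" using \<open>y * d = x\<close> by simp
        then show ?thesis using y0 x0 by (simp add: res_carrier_eq)
      qed
      ultimately have "x = y \<otimes> d" using x0 by (simp add: res_mult_eq)
      then show "x \<in> cgenideal R d" unfolding cgenideal_def using \<open>y \<in> carrier R\<close> by blast
  qed
  then show ?thesis using cgenideal_ideal[OF dC] by simp
qed

lemma ideal_zero: "ideal I R \<Longrightarrow> \<zero> \<in> I"
  by (simp add: additive_subgroup.zero_closed ideal.axioms(1))

lemma essential_char:
  fixes a b :: int
  assumes mab: "m = a * b" and cop: "coprime a b" and a1: "a > 1" and b1: "b > 1"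
    and pa: "\<And>y z. y \<noteq> 0 \<Longrightarrow> z \<noteq> 0 \<Longrightarrow> \<not> a dvd y \<Longrightarrow> \<not> a dvd z \<Longrightarrow> \<not> a dvd lcm y z"
    and pb: "\<And>y z. y \<noteq> 0 \<Longrightarrow> z \<noteq> 0 \<Longrightarrow> \<not> b dvd y \<Longrightarrow> \<not> b dvd z \<Longrightarrow> \<not> b dvd lcm y z"
    and J: "ideal J R"
  shows "essential_ideal R J \<longleftrightarrow>
           \<not> J \<subseteq> {x \<in> carrier R. a dvd x} \<and> \<not> J \<subseteq> {x \<in> carrier R. b dvd x}"
proof -
  define P where "P = {x \<in> carrier R. a dvd x}"
  define Q where "Q = {x \<in> carrier R. b dvd x}"
  have aless: "a < m" using mab a1 b1 by simp
  have bless: "b < m" using mab a1 b1 by simp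
  have Pi: "ideal P R" unfolding P_def using dvd_ideal a1 aless mab by simp
  have Qi: "ideal Q R" unfolding Q_def using dvd_ideal b1 bless mab by simp
  have aP: "a \<in> P" unfolding P_def using a1 aless by (simp add: res_carrier_eq)
  have bQ: "b \<in> Q" unfolding Q_def using b1 bless by (simp add: res_carrier_eq)
  have PQ: "P \<inter> Q \<subseteq> {\<zero>}"
  proof
    fix x assume "x \<in> P \<inter> Q"
    then have "0 \<le> x" "x < m" "a * b dvd x" unfolding P_def Q_def
      using cop by (auto simp: res_carrier_eq divides_mult)
    then show "x \<in> {\<zero>}" using mab zdvd_not_zless[of x "a*b"] by (cases "x = 0") (auto simp: res_zero_eq)
  qed
  show ?thesis unfolding P_def[symmetric] Q_def[symmetric]
  proof
    assume ess: "essential_ideal R J"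
    show "\<not> J \<subseteq> P \<and> \<not> J \<subseteq> Q"
    proof (intro conjI notI)
      assume "J \<subseteq> P"
      moreover have "Q \<noteq> {\<zero>}" using bQ b1 by (auto simp: res_zero_eq)
      ultimately have "J \<inter> Q \<noteq> {\<zero>}" using ess Qi unfolding essential_ideal_def by blast
      moreover have "J \<inter> Q \<subseteq> {\<zero>}" using PQ \<open>J \<subseteq> P\<close> by blast
      moreover have "\<zero> \<in> J \<inter> Q" using ideal_zero J Qi by blast
      ultimately show False by blast
    next
      assume "J \<subseteq> Q"
      moreover have "P \<noteq> {\<zero>}" using aP a1 by (auto simp: res_zero_eq)
      ultimately have "J \<inter> P \<noteq> {\<zero>}" using ess Pi unfolding essential_ideal_def by blast
      moreover have "J \<inter> P \<subseteq> {\<zero>}" using PQ \<open>J \<subseteq> Q\<close> by blast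
      moreover have "\<zero> \<in> J \<inter> P" using ideal_zero J Pi by blast
      ultimately show False by blast
    qed
  next
    assume ne: "\<not> J \<subseteq> P \<and> \<not> J \<subseteq> Q"
    obtain x where x0: "x \<in> J" "x \<notin> P" using ne by blast
    have x: "x \<in> J" "\<not> a dvd x" using x0 ideal.Icarr[OF J x0(1)] unfolding P_def by auto
    obtain x' where x0': "x' \<in> J" "x' \<notin> Q" using ne by blast
    have x': "x' \<in> J" "\<not> b dvd x'" using x0' ideal.Icarr[OF J x0'(1)] unfolding Q_def by auto
    have mod_dvd: "d dvd (u mod m) \<longleftrightarrow> d dvd u" if "d dvd m" for d u
      using that by (simp add: dvd_mod_iff)
    obtain z where z: "z \<in> J" "\<not> a dvd z" "\<not> b dvd z"
    proof (cases "b dvd x")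
      case False then show ?thesis using that x by blast
    next
      case bx: True
      show ?thesis
      proof (cases "a dvd x'")
        case False then show ?thesis using that x' by blast
      next
        case ax': True
        have "x \<oplus> x' \<in> J" using x x' J by (simp add: additive_subgroup.a_closed ideal.axioms(1))
        moreover have "\<not> a dvd (x \<oplus> x')"
        proof -
          have "a dvd m" using mab by simp
          then have "a dvd (x + x') mod m \<longleftrightarrow> a dvd (x + x')" by (rule mod_dvd)
          then show ?thesis using x ax' by (simp add: res_add_eq dvd_add_left_iff)
        qed
        moreover have "\<not> b dvd (x \<oplus> x')"
        proof -
          have "b dvd m" using mab by simp
          then have "b dvd (x + x') mod m \<longleftrightarrow> b dvd (x + x')" by (rule mod_dvd)
          then show ?thesis using x' bx by (simp add: res_add_eq dvd_add_right_iff)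
        qed
        ultimately show ?thesis using that by blast
      qed
    qed
    show "essential_ideal R J" unfolding essential_ideal_def
    proof (intro conjI J allI impI)
      fix K assume K: "ideal K R \<and> K \<noteq> {\<zero>}"
      have Ki: "ideal K R" and Kn: "K \<noteq> {\<zero>}" using K by simp_all
      have "\<zero> \<in> K" by (rule ideal_zero[OF Ki])
      then obtain y where y: "y \<in> K" "y \<noteq> 0" using Kn unfolding res_zero_eq by blast
      have yC: "y \<in> carrier R" by (rule ideal.Icarr[OF Ki y(1)])
      have yr: "0 < y" "y < m" using yC y(2) unfolding res_carrier_eq by auto
      have z0: "z \<noteq> 0" using z(2) by auto
      define l where "l = lcm y z"
      define w where "w = l mod m"
      have ly: "y * (l div y) = l" unfolding l_def by (rule dvd_mult_div_cancel[OF dvd_lcm1])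
      have lz: "z * (l div z) = l" unfolding l_def by (rule dvd_mult_div_cancel[OF dvd_lcm2])
      have mc: "t mod m \<in> carrier R" for t
      proof -
        have "0 \<le> t mod m" "t mod m < m" using m_gt_one by simp_all
        then show ?thesis unfolding res_carrier_eq by simp
      qed
      have "y \<otimes> ((l div y) mod m) = (y * ((l div y) mod m)) mod m" by (rule res_mult_eq)
      also have "\<dots> = (y * (l div y)) mod m" by (rule mod_mult_right_eq)
      also have "\<dots> = w" unfolding w_def ly ..
      finally have wy: "w = y \<otimes> ((l div y) mod m)" by (rule sym)
      have wK: "w \<in> K" unfolding wy by (rule ideal.I_r_closed[OF Ki y(1) mc])
      have "z \<otimes> ((l div z) mod m) = (z * ((l div z) mod m)) mod m" by (rule res_mult_eq)
      also have "\<dots> = (z * (l div z)) mod m" by (rule mod_mult_right_eq)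
      also have "\<dots> = w" unfolding w_def lz ..
      finally have wz: "w = z \<otimes> ((l div z) mod m)" by (rule sym)
      have wJ: "w \<in> J" unfolding wz by (rule ideal.I_r_closed[OF J z(1) mc])
      have "\<not> m dvd y" using zdvd_not_zless[OF yr] .
      then have "\<not> a dvd y \<or> \<not> b dvd y"
      proof (intro disjCI notI)
        assume "\<not> m dvd y" "\<not> \<not> b dvd y" "a dvd y"
        have "b dvd y" using \<open>\<not> \<not> b dvd y\<close> by (rule notnotD)
        have "a * b dvd y" by (rule divides_mult[OF \<open>a dvd y\<close> \<open>b dvd y\<close> cop])
        then show False using \<open>\<not> m dvd y\<close> unfolding mab by contradiction
      qed
      then have "\<not> a dvd l \<or> \<not> b dvd l"
      proof
        assume h: "\<not> a dvd y"
        have "\<not> a dvd lcm y z" by (rule pa[OF y(2) z0 h z(2)])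
        then show ?thesis unfolding l_def by (rule disjI1)
      next
        assume h: "\<not> b dvd y"
        have "\<not> b dvd lcm y z" by (rule pb[OF y(2) z0 h z(3)])
        then show ?thesis unfolding l_def by (rule disjI2)
      qed
      moreover have am: "a dvd m" unfolding mab by (rule dvd_triv_left)
      moreover have bm: "b dvd m" unfolding mab by (rule dvd_triv_right)
      ultimately have "\<not> m dvd l"
      proof (elim disjE)
        assume "\<not> a dvd l" then show ?thesis using dvd_trans[OF am] by blast
      next
        assume "\<not> b dvd l" then show ?thesis using dvd_trans[OF bm] by blast
      qed
      have "w \<noteq> 0"
      proof
        assume "w = 0"
        then have "m dvd l" unfolding w_def by (rule mod_0_imp_dvd)
        then show False using \<open>\<not> m dvd l\<close> by contradiction
      qed
      have "w \<noteq> \<zero>" unfolding res_zero_eq by fact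
      then show "J \<inter> K \<noteq> {\<zero>}" using wK wJ by blast
    qed
  qed
qed

end

theorem mainTheorem13:
  fixes p1 p2 m1 m2 :: nat and n :: int
  assumes "prime p1" and "prime p2" and "p1 < p2"
    and "m1 > 0" and "m2 > 0" and "m1 > 1 \<or> m2 > 1"
    and "n = int (p1 ^ m1 * p2 ^ m2)"
  shows "laplacian_integral
           (essential_ideal_graph_vertices (residue_ring n))
           (essential_ideal_graph_adj (residue_ring n))"
proof -
  define a where "a = int (p1 ^ m1)"
  define b where "b = int (p2 ^ m2)"
  have nab: "n = a * b" unfolding a_def b_def assms(7) by simp
  have p1g: "p1 > 1" using assms(1) prime_gt_1_nat by blast
  have p2g: "p2 > 1" using assms(2) prime_gt_1_nat by blast
  have a1: "a > 1" unfolding a_def using p1g assms(4) by simp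
  have b1: "b > 1" unfolding b_def using p2g assms(5) by simp
  have cop: "coprime a b" unfolding a_def b_def
    using assms(1,2,3) primes_coprime_nat by simp
  have n1: "n > 1" using nab a1 b1
    by (metis less_1_mult)
  interpret residues n "residue_ring n" by unfold_locales (rule n1)
  have pi1: "prime (int p1)" using assms(1) by simp
  have pi2: "prime (int p2)" using assms(2) by simp
  have pa: "\<not> a dvd lcm y z" if "y \<noteq> 0" "z \<noteq> 0" "\<not> a dvd y" "\<not> a dvd z" for y z
    using prime_power_not_dvd_lcm[OF pi1 that[unfolded a_def of_nat_power]] unfolding a_def of_nat_power .
  have pb: "\<not> b dvd lcm y z" if "y \<noteq> 0" "z \<noteq> 0" "\<not> b dvd y" "\<not> b dvd z" for y z
    using prime_power_not_dvd_lcm[OF pi2 that[unfolded b_def of_nat_power]] unfolding b_def of_nat_power .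
  define P where "P = {x \<in> carrier (residue_ring n). a dvd x}"
  define Q where "Q = {x \<in> carrier (residue_ring n). b dvd x}"
  have Pi: "ideal P (residue_ring n)" unfolding P_def
    by (rule dvd_ideal) (use a1 b1 nab in auto)
  have Qi: "ideal Q (residue_ring n)" unfolding Q_def
    by (rule dvd_ideal) (use a1 b1 nab in auto)
  have ess: "essential_ideal (residue_ring n) J \<longleftrightarrow> \<not> J \<subseteq> P \<and> \<not> J \<subseteq> Q"
    if "ideal J (residue_ring n)" for J
    unfolding P_def Q_def by (rule essential_char[OF nab cop a1 b1 pa pb that])
  define V where "V = essential_ideal_graph_vertices (residue_ring n)"
  define Rel where "Rel I K \<longleftrightarrow> I = K \<or> (I \<subseteq> P \<and> K \<subseteq> P) \<or> (I \<subseteq> Q \<and> K \<subseteq> Q)" for I K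
  have Videal: "ideal I (residue_ring n)" if "I \<in> V" for I
    using that unfolding V_def essential_ideal_graph_vertices_def by simp
  have notboth: "\<not> (I \<subseteq> P \<and> I \<subseteq> Q)" if "I \<in> V" for I
  proof
    assume h: "I \<subseteq> P \<and> I \<subseteq> Q"
    have "I \<subseteq> {\<zero>\<^bsub>residue_ring n\<^esub>}"
    proof
      fix x assume "x \<in> I"
      then have "x \<in> carrier (residue_ring n)" "a dvd x" "b dvd x" using h unfolding P_def Q_def by auto
      then have "0 \<le> x" "x < n" "a * b dvd x" using cop divides_mult by (auto simp: res_carrier_eq)
      then have "x = 0" using nab zdvd_not_zless[of x "a*b"] by (cases "x = 0") auto
      then show "x \<in> {\<zero>\<^bsub>residue_ring n\<^esub>}" by (simp add: res_zero_eq)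
    qed
    moreover have "\<zero>\<^bsub>residue_ring n\<^esub> \<in> I" by (rule ideal_zero[OF Videal[OF that]])
    moreover have "I \<noteq> {\<zero>\<^bsub>residue_ring n\<^esub>}" using that unfolding V_def essential_ideal_graph_vertices_def by simp
    ultimately show False by blast
  qed
  have finV: "finite V"
  proof (rule finite_subset)
    show "V \<subseteq> Pow (carrier (residue_ring n))"
    proof
      fix I assume I: "I \<in> V"
      show "I \<in> Pow (carrier (residue_ring n))" using ideal.Icarr[OF Videal[OF I]] by blast
    qed
    show "finite (Pow (carrier (residue_ring n)))" by (simp add: res_carrier_eq)
  qed
  have "laplacian_integral V (essential_ideal_graph_adj (residue_ring n))"
  proof (rule multipartite_laplacian_integral[where R = Rel])
    show "finite V" by (rule finV)
    show "Rel x x" for x unfolding Rel_def by simp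
    show "Rel y x" if "Rel x y" for x y using that unfolding Rel_def by blast
    show "Rel x z" if "x \<in> V" "y \<in> V" "z \<in> V" "Rel x y" "Rel y z" for x y z
      using that notboth[OF that(2)] unfolding Rel_def by blast
    show "essential_ideal_graph_adj (residue_ring n) x y \<longleftrightarrow> \<not> Rel x y"
      if "x \<in> V" "y \<in> V" for x y
    proof -
      have ix: "ideal x (residue_ring n)" and iy: "ideal y (residue_ring n)"
        using Videal that by auto
      have isum: "ideal (set_add (residue_ring n) x y) (residue_ring n)" by (rule add_ideals[OF ix iy])
      have "essential_ideal (residue_ring n) (set_add (residue_ring n) x y) \<longleftrightarrow>
              \<not> (x \<subseteq> P \<and> y \<subseteq> P) \<and> \<not> (x \<subseteq> Q \<and> y \<subseteq> Q)"
        using ess[OF isum] ideal_sum_sub[OF ix iy Pi] ideal_sum_sub[OF ix iy Qi] by simp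
      then show ?thesis unfolding essential_ideal_graph_adj_def Rel_def by blast
    qed
  qed
  then show ?thesis unfolding V_def .
qed

end
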